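(* Let $V$ be a vertex operator algebra of CFT type and $M=\bigoplus_{n\ge0}M(n)$ an admissible $V$-module strongly generated by $W\subseteq M$. Then $\mathrm{gr}\,A(M)$ is generated as a $\mathrm{gr}\,A(V)$-module by $\psi(\{w+C_2(M):w\in W\})$. In particular, if $M$ is strongly finitely generated, then $\mathrm{gr}\,A(M)$ is a finitely generated $\mathrm{gr}\,A(V)$-module.
   Context: $V_0=\mathbb{C}\mathbf{1}$, $V_+=\bigoplus_{n\ge1}V_n$, $Y_M(a,z)=\sum_na_nz^{-n-1}$. $M$ is strongly generated by $W$ if it is spanned by $a^1_{-n_1}\cdots a^k_{-n_k}w$ with $k\ge0$, $a^i\in V_+$ homogeneous, $n_i\ge1$, $w\in W$; strongly finitely generated means strongly generated by a finite set. $C_2(M)=\mathrm{span}\{a_{-2}v:a\in V,v\in M\}$. Zhu's algebra $A(V)=V/O(V)$ (product $a\ast b=\mathrm{Res}_zY(a,z)b\frac{(1+z)^{\mathrm{wt} a}}{z}$) is filtered by $A(V)_n=$ image of $\bigoplus_{i\le n}V_i$. $A(M)=M/O(M)$, $O(M)$ spanned by $\mathrm{Res}_zY_M(a,z)v\frac{(1+z)^{\mathrm{wt} a}}{z^2}$, is an $A(V)$-bimodule ($a\ast v=\mathrm{Res}_zY_M(a,z)v\frac{(1+z)^{\mathrm{wt} a}}{z}$, $v\ast a=\mathrm{Res}_zY_M(a,z)v\frac{(1+z)^{\mathrm{wt} a-1}}{z}$), filtered by $A(M)_n=$ image of $\bigoplus_{i=0}^nM(i)$; $\mathrm{gr}\,A(M)=\bigoplus_nA(M)_n/A(M)_{n-1}$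 is a graded $\mathrm{gr}\,A(V)$-module with $\bar a\ast\bar v=\overline{a_{-1}v}=\bar v\ast\bar a$. $\psi:M/C_2(M)\to\mathrm{gr}\,A(M)$ is the linear map $v+C_2(M)\mapsto\bar v\in A(M)_m/A(M)_{m-1}$ for $v\in M(m)$. *)

theory Defs
  imports Complex_Main
begin

text \<open>A nat-grading V = (direct sum over n) V_n is given by the family of component projections
proj n; V_n is the range of proj n.\<close>

definition nat_graded ::
  "(complex \<Rightarrow> 'v::ab_group_add \<Rightarrow> 'v) \<Rightarrow> (nat \<Rightarrow> 'v \<Rightarrow> 'v) \<Rightarrow> bool" where
  "nat_graded sc proj \<longleftrightarrow>
     vector_space sc \<and>
     (\<forall>n. Vector_Spaces.linear sc sc (proj n)) \<and>
     (\<forall>v. finite {n. proj n v \<noteq> 0}) \<and>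
     (\<forall>v. v = (\<Sum>n\<in>{n. proj n v \<noteq> 0}. proj n v)) \<and>
     (\<forall>m n v. proj m (proj n v) = (if m = n then proj n v else 0))"

definition hcomp :: "(nat \<Rightarrow> 'v \<Rightarrow> 'v) \<Rightarrow> nat \<Rightarrow> 'v set" where
  "hcomp proj n = {v. proj n v = v}"

definition Flt :: "(nat \<Rightarrow> 'v \<Rightarrow> 'v::zero) \<Rightarrow> nat \<Rightarrow> 'v set" where
  "Flt proj d = {v. \<forall>i\<ge>d. proj i v = 0}"

text \<open>Y a n b is the mode a_n b (Y(a,z) = sum a_n z^(-n-1)); YX a n x is the action of a_n on
a target space. The Jacobi identity is equivalent to the Borcherds identity, for all p q r:
  sum_i (p choose i) (a_(r+i) b)_(p+q-i) x
    = sum_i (-1)^i (r choose i) (a_(p+r-i) b_(q+i) x - (-1)^r b_(q+r-i) a_(p+i) x),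
where both sums are finite by truncation; we say the partial sums agree from some point on.\<close>

definition sgn_int :: "int \<Rightarrow> complex" where
  "sgn_int r = (if even r then 1 else -1)"

definition borcherds ::
  "(complex \<Rightarrow> 'x::ab_group_add \<Rightarrow> 'x) \<Rightarrow> ('v \<Rightarrow> int \<Rightarrow> 'v \<Rightarrow> 'v)
     \<Rightarrow> ('v \<Rightarrow> int \<Rightarrow> 'x \<Rightarrow> 'x) \<Rightarrow> bool" where
  "borcherds scX Y YX \<longleftrightarrow>
     (\<forall>a b x p q r. \<exists>N. \<forall>K\<ge>N.
        (\<Sum>i<K. scX ((of_int p :: complex) gchoose i) (YX (Y a (r + int i) b) (p + q - int i) x))
      = (\<Sum>i<K. scX ((-1) ^ i * ((of_int r :: complex) gchoose i))
            (YX a (p + r - int i) (YX b (q + int i) x)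
             - scX (sgn_int r) (YX b (q + r - int i) (YX a (p + int i) x)))))"

text \<open>Parameters: scalar multiplication scV, grading projections projV, modes Y, vacuum vac,
conformal vector om, central charge c.  L(n) = om_(n+1).\<close>

definition VOA ::
  "(complex \<Rightarrow> 'v::ab_group_add \<Rightarrow> 'v) \<Rightarrow> (nat \<Rightarrow> 'v \<Rightarrow> 'v) \<Rightarrow> ('v \<Rightarrow> int \<Rightarrow> 'v \<Rightarrow> 'v)
     \<Rightarrow> 'v \<Rightarrow> 'v \<Rightarrow> complex \<Rightarrow> bool" where
  "VOA scV projV Y vac om c \<longleftrightarrow>
     nat_graded scV projV \<and>
     (\<forall>n. \<exists>B. finite B \<and> hcomp projV n \<subseteq> module.span scV B) \<and>
     (\<forall>n b. Vector_Spaces.linear scV scV (\<lambda>a. Y a n b)) \<and>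
     (\<forall>a n. Vector_Spaces.linear scV scV (Y a n)) \<and>
     (\<forall>a b. \<exists>N. \<forall>n\<ge>N. Y a n b = 0) \<and>
     (\<forall>n v. Y vac n v = (if n = -1 then v else 0)) \<and>
     (\<forall>a. Y a (-1) vac = a) \<and>
     (\<forall>a n. n \<ge> 0 \<longrightarrow> Y a n vac = 0) \<and>
     borcherds scV Y Y \<and>
     om \<in> hcomp projV 2 \<and>
     (\<forall>m n v. Y om (m + 1) (Y om (n + 1) v) - Y om (n + 1) (Y om (m + 1) v)
        = scV (of_int (m - n)) (Y om (m + n + 1) v)
          + (if m + n = 0 then scV ((of_int (m ^ 3 - m) / 12) * c) v else 0)) \<and>
     (\<forall>n v. v \<in> hcomp projV n \<longrightarrow> Y om 1 v = scV (of_nat n) v) \<and>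
     (\<forall>a n v. Y (Y om 0 a) n v = scV (- of_int n) (Y a (n - 1) v))"

definition CFT_type ::
  "(complex \<Rightarrow> 'v::ab_group_add \<Rightarrow> 'v) \<Rightarrow> (nat \<Rightarrow> 'v \<Rightarrow> 'v) \<Rightarrow> 'v \<Rightarrow> bool" where
  "CFT_type scV projV vac \<longleftrightarrow> hcomp projV 0 = module.span scV {vac}"

definition admissible_module ::
  "(complex \<Rightarrow> 'v::ab_group_add \<Rightarrow> 'v) \<Rightarrow> (nat \<Rightarrow> 'v \<Rightarrow> 'v) \<Rightarrow> ('v \<Rightarrow> int \<Rightarrow> 'v \<Rightarrow> 'v) \<Rightarrow> 'v
   \<Rightarrow> (complex \<Rightarrow> 'm::ab_group_add \<Rightarrow> 'm) \<Rightarrow> (nat \<Rightarrow> 'm \<Rightarrow> 'm) \<Rightarrow> ('v \<Rightarrow> int \<Rightarrow> 'm \<Rightarrow> 'm)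
   \<Rightarrow> bool" where
  "admissible_module scV projV Y vac scM projM YM \<longleftrightarrow>
     nat_graded scM projM \<and>
     (\<forall>n w. Vector_Spaces.linear scV scM (\<lambda>a. YM a n w)) \<and>
     (\<forall>a n. Vector_Spaces.linear scM scM (YM a n)) \<and>
     (\<forall>a w. \<exists>N. \<forall>n\<ge>N. YM a n w = 0) \<and>
     (\<forall>n w. YM vac n w = (if n = -1 then w else 0)) \<and>
     borcherds scM Y YM \<and>
     (\<forall>n m k a w. a \<in> hcomp projV n \<longrightarrow> w \<in> hcomp projM m \<longrightarrow>
        (if int m + int n - k - 1 < 0 then YM a k w = 0
         else YM a k w \<in> hcomp projM (nat (int m + int n - k - 1))))"

inductive_set sgen_set ::
  "(nat \<Rightarrow> 'v \<Rightarrow> 'v) \<Rightarrow> ('v \<Rightarrow> int \<Rightarrow> 'm \<Rightarrow> 'm) \<Rightarrow> 'm set \<Rightarrow> 'm set"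
  for projV YM W where
    base: "w \<in> W \<Longrightarrow> w \<in> sgen_set projV YM W"
  | step: "v \<in> sgen_set projV YM W \<Longrightarrow> n \<ge> 1 \<Longrightarrow> a \<in> hcomp projV n \<Longrightarrow> k \<ge> 1
           \<Longrightarrow> YM a (- int k) v \<in> sgen_set projV YM W"

definition strongly_generated ::
  "(nat \<Rightarrow> 'v \<Rightarrow> 'v) \<Rightarrow> (complex \<Rightarrow> 'm::ab_group_add \<Rightarrow> 'm) \<Rightarrow> ('v \<Rightarrow> int \<Rightarrow> 'm \<Rightarrow> 'm)
     \<Rightarrow> 'm set \<Rightarrow> bool" where
  "strongly_generated projV scM YM W \<longleftrightarrow> module.span scM (sgen_set projV YM W) = UNIV"

definition strongly_fin_generated ::
  "(nat \<Rightarrow> 'v \<Rightarrow> 'v) \<Rightarrow> (complex \<Rightarrow> 'm::ab_group_add \<Rightarrow> 'm) \<Rightarrow> ('v \<Rightarrow> int \<Rightarrow> 'm \<Rightarrow> 'm) \<Rightarrow> bool"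
  where
  "strongly_fin_generated projV scM YM \<longleftrightarrow>
     (\<exists>W. finite W \<and> strongly_generated projV scM YM W)"

text \<open>Zhu's left action a * w = Res_z Y_M(a,z) w (1+z)^(wt a)/z for a homogeneous of weight n.\<close>
definition zhu_left ::
  "(complex \<Rightarrow> 'm::ab_group_add \<Rightarrow> 'm) \<Rightarrow> ('v \<Rightarrow> int \<Rightarrow> 'm \<Rightarrow> 'm) \<Rightarrow> nat \<Rightarrow> 'v \<Rightarrow> 'm \<Rightarrow> 'm" where
  "zhu_left scM YM n a w = (\<Sum>i\<le>n. scM (of_nat (n choose i)) (YM a (int i - 1) w))"

text \<open>O(M) = span of Res_z Y_M(a,z) w (1+z)^(wt a)/z^2, a homogeneous.\<close>
definition O_M ::
  "(nat \<Rightarrow> 'v \<Rightarrow> 'v) \<Rightarrow> (complex \<Rightarrow> 'm::ab_group_add \<Rightarrow> 'm) \<Rightarrow> ('v \<Rightarrow> int \<Rightarrow> 'm \<Rightarrow> 'm) \<Rightarrow> 'm set"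
  where
  "O_M projV scM YM = module.span scM
     {(\<Sum>i\<le>n. scM (of_nat (n choose i)) (YM a (int i - 2) w)) | n a w. a \<in> hcomp projV n}"

text \<open>A(M)_d is the image of Flt projM (d+1) in M/O(M), so
  gr_d A(M) = A(M)_d / A(M)_(d-1) = (Flt (d+1) + O(M)) / (Flt d + O(M)).
An element of gr A(M) = (direct sum over d) gr_d A(M) is represented by a finitely supported
family g with g d \<in> Flt (d+1); two representatives are equal iff they agree in each degree d
modulo Flt d + O(M).\<close>

definition grAM_carrier :: "(nat \<Rightarrow> 'm \<Rightarrow> 'm) \<Rightarrow> (nat \<Rightarrow> 'm::ab_group_add) set" where
  "grAM_carrier projM = {g. finite {d. g d \<noteq> 0} \<and> (\<forall>d. g d \<in> Flt projM (Suc d))}"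

definition grAM_low ::
  "(nat \<Rightarrow> 'v \<Rightarrow> 'v) \<Rightarrow> (complex \<Rightarrow> 'm::ab_group_add \<Rightarrow> 'm) \<Rightarrow> (nat \<Rightarrow> 'm \<Rightarrow> 'm)
     \<Rightarrow> ('v \<Rightarrow> int \<Rightarrow> 'm \<Rightarrow> 'm) \<Rightarrow> nat \<Rightarrow> 'm set" where
  "grAM_low projV scM projM YM d = {u + x | u x. u \<in> Flt projM d \<and> x \<in> O_M projV scM YM}"

text \<open>gr A(V) = (direct sum over n) gr_n A(V), and gr_n A(V) consists of the classes of
homogeneous a \<in> V_n.  The class of a \<in> V_n acts on gr A(M) by sending the class of w in
degree k to the class of a * w in degree n + k.  The gr A(V)-submodule generated by a set S of
elements of gr A(M) is therefore the set of finite sums of such products (n, a, h) with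
a \<in> V_n and h \<in> S (scalars can be absorbed into a).  grAM_generated_by S says that this
submodule is all of gr A(M).\<close>

definition grAV_act_family ::
  "(complex \<Rightarrow> 'm::ab_group_add \<Rightarrow> 'm) \<Rightarrow> ('v \<Rightarrow> int \<Rightarrow> 'm \<Rightarrow> 'm)
     \<Rightarrow> nat \<Rightarrow> 'v \<Rightarrow> (nat \<Rightarrow> 'm) \<Rightarrow> nat \<Rightarrow> 'm" where
  "grAV_act_family scM YM n a h d = (if n \<le> d then zhu_left scM YM n a (h (d - n)) else 0)"

definition grAM_generated_by ::
  "(nat \<Rightarrow> 'v \<Rightarrow> 'v) \<Rightarrow> (complex \<Rightarrow> 'm::ab_group_add \<Rightarrow> 'm) \<Rightarrow> (nat \<Rightarrow> 'm \<Rightarrow> 'm)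
     \<Rightarrow> ('v \<Rightarrow> int \<Rightarrow> 'm \<Rightarrow> 'm) \<Rightarrow> (nat \<Rightarrow> 'm) set \<Rightarrow> bool" where
  "grAM_generated_by projV scM projM YM S \<longleftrightarrow>
     (\<forall>g\<in>grAM_carrier projM. \<exists>xs :: (nat \<times> 'v \<times> (nat \<Rightarrow> 'm)) list.
        (\<forall>(n, a, h)\<in>set xs. a \<in> hcomp projV n \<and> h \<in> S) \<and>
        (\<forall>d. g d - (\<Sum>(n, a, h)\<leftarrow>xs. grAV_act_family scM YM n a h d)
               \<in> grAM_low projV scM projM YM d))"

definition grAM_fin_generated ::
  "(nat \<Rightarrow> 'v \<Rightarrow> 'v) \<Rightarrow> (complex \<Rightarrow> 'm::ab_group_add \<Rightarrow> 'm) \<Rightarrow> (nat \<Rightarrow> 'm \<Rightarrow> 'm)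
     \<Rightarrow> ('v \<Rightarrow> int \<Rightarrow> 'm \<Rightarrow> 'm) \<Rightarrow> bool" where
  "grAM_fin_generated projV scM projM YM \<longleftrightarrow>
     (\<exists>S. finite S \<and> S \<subseteq> grAM_carrier projM \<and> grAM_generated_by projV scM projM YM S)"

text \<open>psi(w + C_2(M)) for w \<in> M: the sum over m of the class of the component w_m \<in> M(m)
in gr_m A(M); represented by the family of components.\<close>
definition psi :: "(nat \<Rightarrow> 'm \<Rightarrow> 'm) \<Rightarrow> 'm \<Rightarrow> nat \<Rightarrow> 'm" where
  "psi projM w = (\<lambda>d. projM d w)"

end

theory Submission
  imports Defs
begin

definition C2S :: "('v \<Rightarrow> int \<Rightarrow> 'm \<Rightarrow> 'm) \<Rightarrow> 'm set" where
  "C2S YM = {YM c (- int k) y | c y k. 2 \<le> k}"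

definition GenS :: "(nat \<Rightarrow> 'v \<Rightarrow> 'v) \<Rightarrow> ('v \<Rightarrow> int \<Rightarrow> 'm \<Rightarrow> 'm) \<Rightarrow> 'm set \<Rightarrow> 'm set" where
  "GenS projV YM W = {YM c (-1) w | c w n. c \<in> hcomp projV n \<and> w \<in> W}"

context
  fixes scV :: "complex \<Rightarrow> 'v::ab_group_add \<Rightarrow> 'v"
    and projV :: "nat \<Rightarrow> 'v \<Rightarrow> 'v"
    and Y :: "'v \<Rightarrow> int \<Rightarrow> 'v \<Rightarrow> 'v"
    and vac om :: 'v and c :: complex
    and scM :: "complex \<Rightarrow> 'm::ab_group_add \<Rightarrow> 'm"
    and projM :: "nat \<Rightarrow> 'm \<Rightarrow> 'm"
    and YM :: "'v \<Rightarrow> int \<Rightarrow> 'm \<Rightarrow> 'm"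
  assumes V: "VOA scV projV Y vac om c"
    and CFT: "CFT_type scV projV vac"
    and AM: "admissible_module scV projV Y vac scM projM YM"
begin

lemma gV: "nat_graded scV projV" using V by (simp add: VOA_def)
lemma gM: "nat_graded scM projM" using AM by (simp add: admissible_module_def)

lemma mV: "module scV" using gV by (simp add: nat_graded_def module_iff_vector_space)
lemma mM: "module scM" using gM by (simp add: nat_graded_def module_iff_vector_space)
lemma vsM: "vector_space scM" using gM by (simp add: nat_graded_def)

lemma projV_hom: "module_hom scV scV (projV n)"
  using gV by (simp add: nat_graded_def module_hom_iff_linear)
lemma projM_hom: "module_hom scM scM (projM n)"
  using gM by (simp add: nat_graded_def module_hom_iff_linear)
lemma YMa_hom: "module_hom scV scM (\<lambda>a. YM a n w)"
  using AM by (simp add: admissible_module_def module_hom_iff_linear)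
lemma YMw_hom: "module_hom scM scM (YM a n)"
  using AM by (simp add: admissible_module_def module_hom_iff_linear)

lemma projV_fin: "finite {n. projV n v \<noteq> 0}" using gV by (simp add: nat_graded_def)
lemma projM_fin: "finite {n. projM n v \<noteq> 0}" using gM by (simp add: nat_graded_def)
lemma projV_dec: "v = (\<Sum>n\<in>{n. projV n v \<noteq> 0}. projV n v)" using gV unfolding nat_graded_def by blast
lemma projM_dec: "v = (\<Sum>n\<in>{n. projM n v \<noteq> 0}. projM n v)" using gM unfolding nat_graded_def by blast
lemma projV_pp: "projV m (projV n v) = (if m = n then projV n v else 0)"
  using gV by (simp add: nat_graded_def)
lemma projM_pp: "projM m (projM n v) = (if m = n then projM n v else 0)"
  using gM by (simp add: nat_graded_def)

lemma YM_vac: "YM vac n w = (if n = -1 then w else 0)"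
  using AM by (simp add: admissible_module_def)
lemma bM: "borcherds scM Y YM"
  using AM by (simp add: admissible_module_def)
lemma Y_vac_pos: "n \<ge> 0 \<Longrightarrow> Y a n vac = 0"
  using V by (simp add: VOA_def)
lemma Y_vac_m1: "Y a (-1) vac = a"
  using V by (simp add: VOA_def)
lemma YM_grad: "a \<in> hcomp projV n \<Longrightarrow> w \<in> hcomp projM m \<Longrightarrow>
        (if int m + int n - k - 1 < 0 then YM a k w = 0
         else YM a k w \<in> hcomp projM (nat (int m + int n - k - 1)))"
  using AM by (simp add: admissible_module_def)

lemma vac_hcomp: "vac \<in> hcomp projV 0"
  using CFT module.span_base[OF mV, of vac "{vac}"] by (simp add: CFT_type_def)

lemma YM_zero_a[simp]: "YM 0 n w = 0"
  using module_hom.zero[OF YMa_hom] by simp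
lemma YM_zero_w[simp]: "YM a n 0 = 0"
  using module_hom.zero[OF YMw_hom] by simp
lemma projM_zero[simp]: "projM n 0 = 0"
  using module_hom.zero[OF projM_hom] by simp
lemma scM_zero[simp]: "scM r 0 = 0"
  using module.scale_zero_right[OF mM] by simp
lemma scM_zero_left[simp]: "scM 0 x = 0"
  using module.scale_zero_left[OF mM] by simp
lemma scM_one[simp]: "scM 1 x = x"
  using module.scale_one[OF mM] by simp

lemma hcompM_other: assumes "v \<in> hcomp projM E" "D \<noteq> E" shows "projM D v = 0"
proof -
  have e: "projM E v = v" using assms(1) by (simp add: hcomp_def)
  have "projM D (projM E v) = 0" using projM_pp[of D E v] assms(2) by simp
  then show ?thesis by (simp only: e)
qed

lemma hcompM_Flt: assumes "v \<in> hcomp projM E" "E < D" shows "v \<in> Flt projM D"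
  unfolding Flt_def
proof (intro CollectI allI impI)
  fix i assume "D \<le> i"
  then have "i \<noteq> E" using assms(2) by simp
  then show "projM i v = 0" using hcompM_other[OF assms(1)] by blast
qed

lemma hcompM_self: "v \<in> hcomp projM E \<Longrightarrow> projM E v = v"
  unfolding hcomp_def by simp

lemma projV_hcomp: "projV j v \<in> hcomp projV j"
  unfolding hcomp_def by (simp add: projV_pp)
lemma projM_hcomp: "projM j v \<in> hcomp projM j"
  unfolding hcomp_def by (simp add: projM_pp)

lemma G1: assumes "a \<in> hcomp projV n" "w \<in> hcomp projM m" "int m + int n - k - 1 = int D"
  shows "YM a k w \<in> hcomp projM D"
proof -
  have "\<not> (int m + int n - k - 1 < 0)" using assms(3) by linarith
  then have "YM a k w \<in> hcomp projM (nat (int m + int n - k - 1))"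
    using YM_grad[OF assms(1,2), of k] by presburger
  then show ?thesis using assms(3) by simp
qed

lemma G2: assumes "a \<in> hcomp projV n" "w \<in> hcomp projM m" "int m + int n - k - 1 \<noteq> int D"
  shows "projM D (YM a k w) = 0"
proof (cases "int m + int n - k - 1 < 0")
  case True
  then have "YM a k w = 0" using YM_grad[OF assms(1,2), of k] by presburger
  then show ?thesis by simp
next
  case False
  then have "YM a k w \<in> hcomp projM (nat (int m + int n - k - 1))"
    using YM_grad[OF assms(1,2), of k] by presburger
  moreover have "D \<noteq> nat (int m + int n - k - 1)" using False assms(3) by linarith
  ultimately show ?thesis using hcompM_other by blast
qed

lemma G3: assumes "a \<in> hcomp projV n" "w \<in> hcomp projM m" "int m + int n - k - 1 < int D"
  shows "YM a k w \<in> Flt projM D"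
proof (cases "int m + int n - k - 1 < 0")
  case True
  then have "YM a k w = 0" using YM_grad[OF assms(1,2), of k] by presburger
  then show ?thesis by (simp add: Flt_def)
next
  case False
  then have "YM a k w \<in> hcomp projM (nat (int m + int n - k - 1))"
    using YM_grad[OF assms(1,2), of k] by presburger
  moreover have "nat (int m + int n - k - 1) < D" using False assms(3) by linarith
  ultimately show ?thesis using hcompM_Flt by blast
qed

lemma Flt_sub: "module.subspace scM (Flt projM d)"
proof (rule module.subspaceI[OF mM])
  show "0 \<in> Flt projM d" by (simp add: Flt_def)
next
  fix x y assume "x \<in> Flt projM d" "y \<in> Flt projM d"
  then show "x + y \<in> Flt projM d" by (simp add: Flt_def module_hom.add[OF projM_hom])
next
  fix r x assume "x \<in> Flt projM d"
  then show "scM r x \<in> Flt projM d" by (simp add: Flt_def module_hom.scale[OF projM_hom])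
qed

lemma O_sub: "module.subspace scM (O_M projV scM YM)"
  unfolding O_M_def by (rule module.subspace_span[OF mM])

lemma low_sub: "module.subspace scM (grAM_low projV scM projM YM d)"
  unfolding grAM_low_def by (rule vector_space.subspace_sums[OF vsM Flt_sub O_sub])

lemma Flt_low: "x \<in> Flt projM d \<Longrightarrow> x \<in> grAM_low projV scM projM YM d"
  unfolding grAM_low_def using module.subspace_0[OF mM O_sub] by force

lemma O_low: "x \<in> O_M projV scM YM \<Longrightarrow> x \<in> grAM_low projV scM projM YM d"
  unfolding grAM_low_def using module.subspace_0[OF mM Flt_sub] by force

lemma C2I: "t \<le> -2 \<Longrightarrow> YM a t y \<in> module.span scM (C2S YM)"
proof -
  assume t: "t \<le> -2"
  have "YM a t y \<in> C2S YM" unfolding C2S_def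
    by (rule CollectI, rule exI[of _ a], rule exI[of _ y], rule exI[of _ "nat (-t)"]) (use t in auto)
  then show ?thesis by (rule module.span_base[OF mM])
qed

lemma B_comm: "\<exists>N. \<forall>K\<ge>N. (\<Sum>i<K. scM ((of_int p :: complex) gchoose i) (YM (Y a (int i) b) (p + q - int i) x))
   = YM a p (YM b q x) - YM b q (YM a p x)"
proof -
  obtain N where N: "\<forall>K\<ge>N.
        (\<Sum>i<K. scM ((of_int p :: complex) gchoose i) (YM (Y a (0 + int i) b) (p + q - int i) x))
      = (\<Sum>i<K. scM ((-1) ^ i * ((of_int 0 :: complex) gchoose i))
            (YM a (p + 0 - int i) (YM b (q + int i) x)
             - scM (sgn_int 0) (YM b (q + 0 - int i) (YM a (p + int i) x))))"
    using bM unfolding borcherds_def by blast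
  show ?thesis
  proof (rule exI[of _ "Suc N"], intro allI impI)
    fix K assume K: "Suc N \<le> K"
    then obtain K' where K': "K = Suc K'" by (cases K) auto
    have "(\<Sum>i<K. scM ((-1) ^ i * ((of_int 0 :: complex) gchoose i))
            (YM a (p + 0 - int i) (YM b (q + int i) x)
             - scM (sgn_int 0) (YM b (q + 0 - int i) (YM a (p + int i) x))))
         = YM a p (YM b q x) - YM b q (YM a p x)"
      unfolding K' sum.lessThan_Suc_shift by (simp add: gbinomial_0_left sgn_int_def)
    then show "(\<Sum>i<K. scM ((of_int p :: complex) gchoose i) (YM (Y a (int i) b) (p + q - int i) x))
   = YM a p (YM b q x) - YM b q (YM a p x)" using N K by simp
  qed
qed

lemma B_norm: "YM a (-1) (YM b (-1) x) - YM (Y a (-1) b) (-1) x \<in> module.span scM (C2S YM)"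
proof -
  define F where "F = (\<lambda>i::nat. scM ((of_int 0 :: complex) gchoose i) (YM (Y a (-1 + int i) b) (0 + -1 - int i) x))"
  define G where "G = (\<lambda>i::nat. scM ((-1) ^ i * ((of_int (-1) :: complex) gchoose i))
            (YM a (0 + -1 - int i) (YM b (-1 + int i) x)
             - scM (sgn_int (-1)) (YM b (-1 + -1 - int i) (YM a (0 + int i) x))))"
  have "\<exists>N. \<forall>K\<ge>N. (\<Sum>i<K. F i) = (\<Sum>i<K. G i)"
    using bM unfolding borcherds_def F_def G_def by blast
  then obtain N where N: "\<forall>K\<ge>N. (\<Sum>i<K. F i) = (\<Sum>i<K. G i)" by blast
  have eq: "(\<Sum>i<Suc N. F i) = (\<Sum>i<Suc N. G i)" by (rule N[rule_format]) simp
  have LF: "(\<Sum>i<Suc N. F i) = YM (Y a (-1) b) (-1) x"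
    unfolding sum.lessThan_Suc_shift F_def by (simp add: gbinomial_0_left)
  have G0: "G 0 = YM a (-1) (YM b (-1) x) - scM (sgn_int (-1)) (YM b (-2) (YM a 0 x))"
    unfolding G_def by simp
  let ?S = "module.span scM (C2S YM)"
  have GS: "G (Suc i) \<in> ?S" for i
    unfolding G_def
    by (intro module.span_scale[OF mM] module.span_diff[OF mM] C2I) auto
  have "YM a (-1) (YM b (-1) x) - YM (Y a (-1) b) (-1) x
        = scM (sgn_int (-1)) (YM b (-2) (YM a 0 x)) - (\<Sum>i<N. G (Suc i))"
  proof -
    have eq2: "YM (Y a (-1) b) (-1) x = G 0 + (\<Sum>i<N. G (Suc i))"
      using eq unfolding LF by (simp only: sum.lessThan_Suc_shift)
    show ?thesis unfolding eq2 G0 by (simp add: algebra_simps)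
  qed
  also have "\<dots> \<in> ?S"
    by (intro module.span_diff[OF mM] module.span_scale[OF mM] module.span_sum[OF mM] C2I GS) auto
  finally show ?thesis .
qed

lemma B_L1: "YM (Y a (-2) vac) p x + scM (of_int p) (YM a (p - 1) x) = 0"
proof -
  define F where "F = (\<lambda>i::nat. scM ((of_int p :: complex) gchoose i) (YM (Y a (-2 + int i) vac) (p + 0 - int i) x))"
  define G where "G = (\<lambda>i::nat. scM ((-1) ^ i * ((of_int (-2) :: complex) gchoose i))
            (YM a (p + -2 - int i) (YM vac (0 + int i) x)
             - scM (sgn_int (-2)) (YM vac (0 + -2 - int i) (YM a (p + int i) x))))"
  have "\<exists>N. \<forall>K\<ge>N. (\<Sum>i<K. F i) = (\<Sum>i<K. G i)"
    using bM unfolding borcherds_def F_def G_def by blast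
  then obtain N where N: "\<forall>K\<ge>N. (\<Sum>i<K. F i) = (\<Sum>i<K. G i)" by blast
  have eq: "(\<Sum>i<Suc (Suc N). F i) = (\<Sum>i<Suc (Suc N). G i)" by (rule N[rule_format]) simp
  have G0: "G i = 0" for i
    unfolding G_def by (simp add: YM_vac)
  have F2: "F (Suc (Suc i)) = 0" for i
  proof -
    have "Y a (-2 + int (Suc (Suc i))) vac = 0" by (rule Y_vac_pos) simp
    then show ?thesis unfolding F_def by simp
  qed
  have "(\<Sum>i<Suc (Suc N). F i) = F 0 + F 1"
    unfolding sum.lessThan_Suc_shift by (simp add: F2)
  also have "\<dots> = YM (Y a (-2) vac) p x + scM (of_int p) (YM a (p - 1) x)"
    unfolding F_def by (simp add: Y_vac_m1)
  finally show ?thesis using eq by (simp add: G0)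
qed

lemma YMa_sum: "YM (\<Sum>j\<in>S. f j) t y = (\<Sum>j\<in>S. YM (f j) t y)"
  using module_hom.sum[OF YMa_hom, of f S t y] by simp
lemma YMw_sum: "YM a t (\<Sum>j\<in>S. f j) = (\<Sum>j\<in>S. YM a t (f j))"
  using module_hom.sum[OF YMw_hom, of a t f S] by simp
lemma projM_sum: "projM d (\<Sum>j\<in>S. f j) = (\<Sum>j\<in>S. projM d (f j))"
  using module_hom.sum[OF projM_hom, of d f S] by simp
lemma projM_scale: "projM d (scM r x) = scM r (projM d x)"
  using module_hom.scale[OF projM_hom] by simp

lemma YM_dec_a: "YM a t y = (\<Sum>j\<in>{j. projV j a \<noteq> 0}. YM (projV j a) t y)"
proof -
  have "YM a t y = YM (\<Sum>j\<in>{j. projV j a \<noteq> 0}. projV j a) t y" using projV_dec[of a] by simp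
  then show ?thesis by (simp only: YMa_sum)
qed

lemma YM_dec_w: "YM a t y = (\<Sum>j\<in>{j. projM j y \<noteq> 0}. YM a t (projM j y))"
proof -
  have "YM a t y = YM a t (\<Sum>j\<in>{j. projM j y \<noteq> 0}. projM j y)" using projM_dec[of y] by simp
  then show ?thesis by (simp only: YMw_sum)
qed

lemma C2_low: "2 \<le> k \<Longrightarrow> a \<in> hcomp projV n \<Longrightarrow> y \<in> hcomp projM m
   \<Longrightarrow> YM a (- int k) y \<in> grAM_low projV scM projM YM (m + n + k - 1)"
proof (induction k arbitrary: a n rule: nat_induct_at_least)
  case base
  define ov where "ov = (\<Sum>i\<le>n. scM (of_nat (n choose i)) (YM a (int i - 2) y))"
  have oO: "ov \<in> O_M projV scM YM" unfolding O_M_def ov_def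
    by (rule module.span_base[OF mM]) (use base in blast)
  define r where "r = (\<Sum>i<n. scM (of_nat (n choose Suc i)) (YM a (int (Suc i) - 2) y))"
  have osplit: "ov = YM a (-2) y + r" unfolding ov_def r_def sum.atMost_shift by simp
  have rF: "r \<in> Flt projM (m + n + 1)" unfolding r_def
  proof (rule module.subspace_sum[OF mM Flt_sub], rule module.subspace_scale[OF mM Flt_sub])
    fix i show "YM a (int (Suc i) - 2) y \<in> Flt projM (m + n + 1)"
      by (rule G3[OF base(1) base(2)]) simp
  qed
  have "YM a (-2) y = (- r) + ov" using osplit by (simp add: algebra_simps)
  moreover have "- r \<in> Flt projM (m + n + 1)" by (rule module.subspace_neg[OF mM Flt_sub rF])
  ultimately have "YM a (-2) y \<in> grAM_low projV scM projM YM (m + n + 1)"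
    unfolding grAM_low_def using oO by blast
  then show ?case by simp
next
  case (Suc k)
  define c' where "c' = Y a (-2) vac"
  define z where "z = YM a (- int (Suc k)) y"
  define D where "D = m + n + k"
  have kpos: "(of_nat k :: complex) \<noteq> 0" using Suc(1) by simp
  have bl: "YM c' (- int k) y + scM (of_int (- int k)) (YM a (- int k - 1) y) = 0"
    unfolding c'_def by (rule B_L1)
  have e1: "YM c' (- int k) y = scM (of_nat k) z" if "YM c' (- int k) y + scM (of_int (- int k)) (YM a (- int k - 1) y) = 0"
  proof -
    have i: "- int (Suc k) = - int k - 1" by simp
    show ?thesis unfolding z_def i using module.scale_minus_left[OF mM] that
      by (simp add: algebra_simps eq_neg_iff_add_eq_0[symmetric])
  qed
  have zz: "z = scM (1 / of_nat k) (YM c' (- int k) y)"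
    unfolding e1[OF bl] using kpos by (simp add: module.scale_scale[OF mM])
  have zh: "z \<in> hcomp projM D" unfolding z_def D_def
    by (rule G1[OF Suc(3) Suc(4)]) simp
  have "z = projM D z" using hcompM_self[OF zh] by simp
  also have "\<dots> = scM (1 / of_nat k) (\<Sum>j\<in>{j. projV j c' \<noteq> 0}. projM D (YM (projV j c') (- int k) y))"
    by (subst zz, subst YM_dec_a) (simp only: projM_scale projM_sum)
  also have "\<dots> \<in> grAM_low projV scM projM YM D"
  proof (rule module.subspace_scale[OF mM low_sub], rule module.subspace_sum[OF mM low_sub])
    fix j
    show "projM D (YM (projV j c') (- int k) y) \<in> grAM_low projV scM projM YM D"
    proof (cases "j = n + 1")
      case True
      have h: "YM (projV j c') (- int k) y \<in> hcomp projM D"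
        by (rule G1[OF projV_hcomp Suc(4)]) (simp add: True D_def)
      have "YM (projV j c') (- int k) y \<in> grAM_low projV scM projM YM (m + j + k - 1)"
        by (rule Suc.IH[OF projV_hcomp Suc(4)])
      then show ?thesis using hcompM_self[OF h] True Suc(1) by (simp add: D_def)
    next
      case False
      have "projM D (YM (projV j c') (- int k) y) = 0"
        by (rule G2[OF projV_hcomp Suc(4)]) (use False in \<open>simp add: D_def\<close>)
      then show ?thesis using module.subspace_0[OF mM low_sub] by simp
    qed
  qed
  finally show ?case unfolding z_def D_def by simp
qed

lemma C2_neg: assumes "x \<in> module.span scM (C2S YM)"
  shows "projM d x \<in> grAM_low projV scM projM YM d"
proof -
  have "x \<in> {x. projM d x \<in> grAM_low projV scM projM YM d}"
  proof (rule module.span_subspace_induct[OF mM assms])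
    show "module.subspace scM {x. projM d x \<in> grAM_low projV scM projM YM d}"
      by (rule module_hom.subspace_linear_preimage[OF projM_hom low_sub])
  next
    fix x assume "x \<in> C2S YM"
    then obtain a y k where x: "x = YM a (- int k) y" and k: "2 \<le> k" unfolding C2S_def by blast
    have "x = (\<Sum>j\<in>{j. projV j a \<noteq> 0}. YM (projV j a) (- int k) y)"
      unfolding x by (rule YM_dec_a)
    also have "\<dots> = (\<Sum>j\<in>{j. projV j a \<noteq> 0}. \<Sum>i\<in>{i. projM i y \<noteq> 0}. YM (projV j a) (- int k) (projM i y))"
      by (rule sum.cong[OF refl], rule YM_dec_w)
    finally have xe: "projM d x = (\<Sum>j\<in>{j. projV j a \<noteq> 0}. \<Sum>i\<in>{i. projM i y \<noteq> 0}. projM d (YM (projV j a) (- int k) (projM i y)))"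
      by (simp only: projM_sum)
    have "(\<Sum>j\<in>{j. projV j a \<noteq> 0}. \<Sum>i\<in>{i. projM i y \<noteq> 0}. projM d (YM (projV j a) (- int k) (projM i y)))
       \<in> grAM_low projV scM projM YM d"
    proof (intro module.subspace_sum[OF mM low_sub])
      fix i j
      show "projM d (YM (projV j a) (- int k) (projM i y)) \<in> grAM_low projV scM projM YM d"
      proof (cases "i + j + k - 1 = d")
        case True
        have h: "YM (projV j a) (- int k) (projM i y) \<in> hcomp projM d"
          by (rule G1[OF projV_hcomp projM_hcomp]) (use True k in auto)
        have "YM (projV j a) (- int k) (projM i y) \<in> grAM_low projV scM projM YM (i + j + k - 1)"
          by (rule C2_low[OF k projV_hcomp projM_hcomp])
        then show ?thesis using hcompM_self[OF h] True by simp
      next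
        case False
        have "projM d (YM (projV j a) (- int k) (projM i y)) = 0"
          by (rule G2[OF projV_hcomp projM_hcomp]) (use False k in auto)
        then show ?thesis using module.subspace_0[OF mM low_sub] by simp
      qed
    qed
    then show "x \<in> {x. projM d x \<in> grAM_low projV scM projM YM d}" using xe by simp
  qed
  then show ?thesis by simp
qed

lemma proj_m1: assumes cc: "cc \<in> hcomp projV n"
  shows "projM d (YM cc (-1) w) = (if n \<le> d then YM cc (-1) (projM (d - n) w) else 0)"
proof -
  have tm: "projM d (YM cc (-1) (projM i w)) = (if n \<le> d \<and> i = d - n then YM cc (-1) (projM (d - n) w) else 0)" for i
  proof (cases "n \<le> d \<and> i = d - n")
    case True
    have h: "YM cc (-1) (projM i w) \<in> hcomp projM d"
      by (rule G1[OF cc projM_hcomp]) (use True in auto)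
    show ?thesis using hcompM_self[OF h] True by simp
  next
    case False
    have "projM d (YM cc (-1) (projM i w)) = 0"
      by (rule G2[OF cc projM_hcomp]) (use False in auto)
    moreover have "(if n \<le> d \<and> i = d - n then YM cc (-1) (projM (d - n) w) else 0) = 0"
      using False by (simp only: if_False)
    ultimately show ?thesis by simp
  qed
  have "projM d (YM cc (-1) w) = (\<Sum>i\<in>{i. projM i w \<noteq> 0}. projM d (YM cc (-1) (projM i w)))"
    by (subst YM_dec_w) (simp only: projM_sum)
  also have "\<dots> = (\<Sum>i\<in>{i. projM i w \<noteq> 0}. (if n \<le> d \<and> i = d - n then YM cc (-1) (projM (d - n) w) else 0))"
    by (simp only: tm)
  also have "\<dots> = (if n \<le> d then YM cc (-1) (projM (d - n) w) else 0)"
  proof (cases "n \<le> d")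
    case True
    have "(\<Sum>i\<in>{i. projM i w \<noteq> 0}. (if n \<le> d \<and> i = d - n then YM cc (-1) (projM (d - n) w) else 0))
       = (\<Sum>i\<in>{i. projM i w \<noteq> 0}. (if i = d - n then YM cc (-1) (projM (d - n) w) else 0))"
      using True by simp
    also have "\<dots> = (if d - n \<in> {i. projM i w \<noteq> 0} then YM cc (-1) (projM (d - n) w) else 0)"
      by (rule sum.delta[OF projM_fin])
    also have "\<dots> = YM cc (-1) (projM (d - n) w)" by auto
    finally show ?thesis using True by simp
  next
    case False
    then show ?thesis by simp
  qed
  finally show ?thesis .
qed

lemma zhu_top: assumes cc: "cc \<in> hcomp projV n" and y: "y \<in> hcomp projM m"
  shows "zhu_left scM YM n cc y - YM cc (-1) y \<in> Flt projM (m + n)"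
proof -
  have "zhu_left scM YM n cc y = YM cc (-1) y + (\<Sum>i<n. scM (of_nat (n choose Suc i)) (YM cc (int (Suc i) - 1) y))"
    unfolding zhu_left_def sum.atMost_shift by simp
  moreover have "(\<Sum>i<n. scM (of_nat (n choose Suc i)) (YM cc (int (Suc i) - 1) y)) \<in> Flt projM (m + n)"
  proof (rule module.subspace_sum[OF mM Flt_sub], rule module.subspace_scale[OF mM Flt_sub])
    fix i show "YM cc (int (Suc i) - 1) y \<in> Flt projM (m + n)"
      by (rule G3[OF cc y]) simp
  qed
  ultimately show ?thesis by simp
qed

lemma GenS_low: assumes cc: "cc \<in> hcomp projV n"
  shows "projM d (YM cc (-1) w) - grAV_act_family scM YM n cc (psi projM w) d \<in> grAM_low projV scM projM YM d"
proof (cases "n \<le> d")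
  case True
  have "zhu_left scM YM n cc (projM (d - n) w) - YM cc (-1) (projM (d - n) w) \<in> Flt projM (d - n + n)"
    by (rule zhu_top[OF cc projM_hcomp])
  then have h: "zhu_left scM YM n cc (projM (d - n) w) - YM cc (-1) (projM (d - n) w) \<in> Flt projM d"
    using True by simp
  have "- (zhu_left scM YM n cc (projM (d - n) w) - YM cc (-1) (projM (d - n) w)) \<in> Flt projM d"
    by (rule module.subspace_neg[OF mM Flt_sub h])
  then show ?thesis using True unfolding proj_m1[OF cc] grAV_act_family_def psi_def
    by (intro Flt_low) simp
next
  case False
  then show ?thesis unfolding proj_m1[OF cc] grAV_act_family_def
    using module.subspace_0[OF mM low_sub] by simp
qed

lemma step1: assumes "x \<in> module.span scM (GenS projV YM W \<union> C2S YM)"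
  shows "YM a (-1) x \<in> module.span scM (GenS projV YM W \<union> C2S YM)"
proof -
  let ?GC = "module.span scM (GenS projV YM W \<union> C2S YM)"
  have C2GC: "module.span scM (C2S YM) \<subseteq> ?GC" by (rule module.span_mono[OF mM]) blast
  have "x \<in> {x. YM a (-1) x \<in> ?GC}"
  proof (rule module.span_subspace_induct[OF mM assms])
    show "module.subspace scM {x. YM a (-1) x \<in> ?GC}"
      by (rule module_hom.subspace_linear_preimage[OF YMw_hom module.subspace_span[OF mM]])
  next
    fix x assume "x \<in> GenS projV YM W \<union> C2S YM"
    then consider (G) cc w n where "x = YM cc (-1) w" "cc \<in> hcomp projV n" "w \<in> W"
      | (C) cc y k where "x = YM cc (- int k) y" "2 \<le> k"
      unfolding GenS_def C2S_def by blast
    then show "x \<in> {x. YM a (-1) x \<in> ?GC}"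
    proof cases
      case G
      define e where "e = Y a (-1) cc"
      have d1: "YM a (-1) x - YM e (-1) w \<in> ?GC"
        unfolding G(1) e_def using B_norm C2GC by blast
      have "YM e (-1) w = (\<Sum>j\<in>{j. projV j e \<noteq> 0}. YM (projV j e) (-1) w)" by (rule YM_dec_a)
      also have "\<dots> \<in> ?GC"
      proof (rule module.span_sum[OF mM], rule module.span_base[OF mM])
        fix j show "YM (projV j e) (-1) w \<in> GenS projV YM W \<union> C2S YM"
          unfolding GenS_def using projV_hcomp G(3) by blast
      qed
      finally have "YM e (-1) w \<in> ?GC" .
      then have "(YM a (-1) x - YM e (-1) w) + YM e (-1) w \<in> ?GC"
        using d1 module.span_add[OF mM] by blast
      then show ?thesis by simp
    next
      case C
      obtain N where N: "\<forall>K\<ge>N. (\<Sum>i<K. scM ((of_int (-1) :: complex) gchoose i) (YM (Y a (int i) cc) (-1 + - int k - int i) y))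
         = YM a (-1) (YM cc (- int k) y) - YM cc (- int k) (YM a (-1) y)"
        using B_comm by blast
      have "YM a (-1) x = YM cc (- int k) (YM a (-1) y) + (\<Sum>i<N. scM ((of_int (-1) :: complex) gchoose i) (YM (Y a (int i) cc) (-1 + - int k - int i) y))"
        using N[rule_format, of N] unfolding C(1) by simp
      also have "\<dots> \<in> module.span scM (C2S YM)"
        by (intro module.span_add[OF mM] module.span_sum[OF mM] module.span_scale[OF mM] C2I) (use C(2) in auto)
      finally show ?thesis using C2GC by blast
    qed
  qed
  then show ?thesis by simp
qed

lemma sgen_GC: "v \<in> sgen_set projV YM W \<Longrightarrow> v \<in> module.span scM (GenS projV YM W \<union> C2S YM)"
proof (induction rule: sgen_set.induct)
  case (base w)
  have "YM vac (-1) w \<in> GenS projV YM W" unfolding GenS_def using vac_hcomp base by blast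
  then show ?case using YM_vac[of "-1" w] module.span_base[OF mM] by auto
next
  case (step v n a k)
  show ?case
  proof (cases "k = 1")
    case True
    then show ?thesis using step1[OF step.IH] by simp
  next
    case False
    then have "2 \<le> k" using step.hyps by simp
    then have "YM a (- int k) v \<in> C2S YM" unfolding C2S_def by blast
    then show ?thesis using module.span_base[OF mM] by blast
  qed
qed

lemma actfam_scale: "grAV_act_family scM YM n (scV r a) h d = scM r (grAV_act_family scM YM n a h d)"
proof -
  have "zhu_left scM YM n (scV r a) y = scM r (zhu_left scM YM n a y)" for y
    unfolding zhu_left_def module.scale_sum_right[OF mM] module_hom.scale[OF YMa_hom]
    by (simp add: module.scale_left_commute[OF mM])
  then show ?thesis unfolding grAV_act_family_def by simp
qed

lemma sumlist_scale: "(\<Sum>(n, a, h)\<leftarrow>map (\<lambda>(n, a, h). (n, scV r a, h)) xs. grAV_act_family scM YM n a h d)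
   = scM r (\<Sum>(n, a, h)\<leftarrow>xs. grAV_act_family scM YM n a h d)"
  by (induction xs) (auto simp: actfam_scale module.scale_right_distrib[OF mM])

definition Rset :: "'m set \<Rightarrow> 'm set" where
  "Rset W = {v. \<exists>xs :: (nat \<times> 'v \<times> (nat \<Rightarrow> 'm)) list.
        (\<forall>(n, a, h)\<in>set xs. a \<in> hcomp projV n \<and> h \<in> psi projM ` W) \<and>
        (\<forall>d. projM d v - (\<Sum>(n, a, h)\<leftarrow>xs. grAV_act_family scM YM n a h d)
               \<in> grAM_low projV scM projM YM d)}"

lemma Rset_sub: "module.subspace scM (Rset W)"
proof (rule module.subspaceI[OF mM])
  show "0 \<in> Rset W" unfolding Rset_def
    by (rule CollectI, rule exI[of _ "[]"]) (simp add: module.subspace_0[OF mM low_sub])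
next
  fix x y assume "x \<in> Rset W" "y \<in> Rset W"
  then obtain xs ys where xs: "\<forall>(n, a, h)\<in>set xs. a \<in> hcomp projV n \<and> h \<in> psi projM ` W"
      "\<forall>d. projM d x - (\<Sum>(n, a, h)\<leftarrow>xs. grAV_act_family scM YM n a h d) \<in> grAM_low projV scM projM YM d"
    and ys: "\<forall>(n, a, h)\<in>set ys. a \<in> hcomp projV n \<and> h \<in> psi projM ` W"
      "\<forall>d. projM d y - (\<Sum>(n, a, h)\<leftarrow>ys. grAV_act_family scM YM n a h d) \<in> grAM_low projV scM projM YM d"
    unfolding Rset_def by blast
  show "x + y \<in> Rset W" unfolding Rset_def
  proof (rule CollectI, rule exI[of _ "xs @ ys"], intro conjI allI)
    show "\<forall>(n, a, h)\<in>set (xs @ ys). a \<in> hcomp projV n \<and> h \<in> psi projM ` W" using xs(1) ys(1) by auto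
  next
    fix d
    have "projM d (x + y) - (\<Sum>(n, a, h)\<leftarrow>xs @ ys. grAV_act_family scM YM n a h d)
      = (projM d x - (\<Sum>(n, a, h)\<leftarrow>xs. grAV_act_family scM YM n a h d))
        + (projM d y - (\<Sum>(n, a, h)\<leftarrow>ys. grAV_act_family scM YM n a h d))"
      by (simp add: module_hom.add[OF projM_hom])
    also have "\<dots> \<in> grAM_low projV scM projM YM d"
      using module.subspace_add[OF mM low_sub] xs(2) ys(2) by blast
    finally show "projM d (x + y) - (\<Sum>(n, a, h)\<leftarrow>xs @ ys. grAV_act_family scM YM n a h d) \<in> grAM_low projV scM projM YM d" .
  qed
next
  fix r x assume "x \<in> Rset W"
  then obtain xs where xs: "\<forall>(n, a, h)\<in>set xs. a \<in> hcomp projV n \<and> h \<in> psi projM ` W"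
      "\<forall>d. projM d x - (\<Sum>(n, a, h)\<leftarrow>xs. grAV_act_family scM YM n a h d) \<in> grAM_low projV scM projM YM d"
    unfolding Rset_def by blast
  show "scM r x \<in> Rset W" unfolding Rset_def
  proof (rule CollectI, rule exI[of _ "map (\<lambda>(n, a, h). (n, scV r a, h)) xs"], intro conjI allI)
    have "a \<in> hcomp projV n \<Longrightarrow> scV r a \<in> hcomp projV n" for a n
      unfolding hcomp_def using module_hom.scale[OF projV_hom] by simp
    then show "\<forall>(n, a, h)\<in>set (map (\<lambda>(n, a, h). (n, scV r a, h)) xs). a \<in> hcomp projV n \<and> h \<in> psi projM ` W"
      using xs(1) by auto
  next
    fix d
    have "projM d (scM r x) - (\<Sum>(n, a, h)\<leftarrow>map (\<lambda>(n, a, h). (n, scV r a, h)) xs. grAV_act_family scM YM n a h d)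
      = scM r (projM d x - (\<Sum>(n, a, h)\<leftarrow>xs. grAV_act_family scM YM n a h d))"
      unfolding sumlist_scale by (simp add: projM_scale module.scale_right_diff_distrib[OF mM])
    also have "\<dots> \<in> grAM_low projV scM projM YM d"
      using module.subspace_scale[OF mM low_sub] xs(2) by blast
    finally show "projM d (scM r x) - (\<Sum>(n, a, h)\<leftarrow>map (\<lambda>(n, a, h). (n, scV r a, h)) xs. grAV_act_family scM YM n a h d) \<in> grAM_low projV scM projM YM d" .
  qed
qed

lemma GC_Rset: "module.span scM (GenS projV YM W \<union> C2S YM) \<subseteq> Rset W"
proof (rule module.span_minimal[OF mM _ Rset_sub], rule subsetI)
  fix x assume "x \<in> GenS projV YM W \<union> C2S YM"
  then consider (G) cc w n where "x = YM cc (-1) w" "cc \<in> hcomp projV n" "w \<in> W"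
      | (C) "x \<in> C2S YM"
      unfolding GenS_def by blast
  then show "x \<in> Rset W"
  proof cases
    case G
    show ?thesis unfolding Rset_def
      by (rule CollectI, rule exI[of _ "[(n, cc, psi projM w)]"]) (use G GenS_low in auto)
  next
    case C
    then have "x \<in> module.span scM (C2S YM)" by (rule module.span_base[OF mM])
    then show ?thesis unfolding Rset_def
      by (intro CollectI exI[of _ "[]"]) (simp add: C2_neg)
  qed
qed

lemma psi_carrier: "psi projM w \<in> grAM_carrier projM"
  unfolding grAM_carrier_def psi_def Flt_def
  using projM_fin[of w] by (auto simp: projM_pp)

lemma main: assumes "strongly_generated projV scM YM W"
  shows "grAM_generated_by projV scM projM YM (psi projM ` W)"
  unfolding grAM_generated_by_def
proof
  fix g assume g: "g \<in> grAM_carrier projM"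
  define G where "G = {d. g d \<noteq> 0}"
  have Gfin: "finite G" using g unfolding G_def grAM_carrier_def by simp
  have gF: "g d \<in> Flt projM (Suc d)" for d using g unfolding grAM_carrier_def by simp
  define v where "v = (\<Sum>e\<in>G. projM e (g e))"
  have "v \<in> module.span scM (sgen_set projV YM W)" using assms unfolding strongly_generated_def by simp
  moreover have "module.span scM (sgen_set projV YM W) \<subseteq> module.span scM (GenS projV YM W \<union> C2S YM)"
    by (rule module.span_minimal[OF mM]) (use sgen_GC in blast, rule module.subspace_span[OF mM])
  ultimately have "v \<in> Rset W" using GC_Rset by blast
  then obtain xs where xs: "\<forall>(n, a, h)\<in>set xs. a \<in> hcomp projV n \<and> h \<in> psi projM ` W"
      "\<forall>d. projM d v - (\<Sum>(n, a, h)\<leftarrow>xs. grAV_act_family scM YM n a h d) \<in> grAM_low projV scM projM YM d"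
    unfolding Rset_def by blast
  show "\<exists>xs :: (nat \<times> 'v \<times> (nat \<Rightarrow> 'm)) list.
        (\<forall>(n, a, h)\<in>set xs. a \<in> hcomp projV n \<and> h \<in> psi projM ` W) \<and>
        (\<forall>d. g d - (\<Sum>(n, a, h)\<leftarrow>xs. grAV_act_family scM YM n a h d)
               \<in> grAM_low projV scM projM YM d)"
  proof (rule exI[of _ xs], intro conjI allI)
    show "\<forall>(n, a, h)\<in>set xs. a \<in> hcomp projV n \<and> h \<in> psi projM ` W" by (rule xs(1))
  next
    fix d
    have "projM d v = (\<Sum>e\<in>G. projM d (projM e (g e)))" unfolding v_def by (rule projM_sum)
    also have "\<dots> = (\<Sum>e\<in>G. if d = e then projM e (g e) else 0)" by (simp add: projM_pp)
    also have "\<dots> = (if d \<in> G then projM d (g d) else 0)" by (rule sum.delta'[OF Gfin])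
    also have "\<dots> = projM d (g d)" unfolding G_def by auto
    finally have pv: "projM d v = projM d (g d)" .
    have fl: "g d - projM d (g d) \<in> Flt projM d" unfolding Flt_def
    proof (intro CollectI allI impI)
      fix i assume i: "d \<le> i"
      show "projM i (g d - projM d (g d)) = 0"
      proof (cases "i = d")
        case True then show ?thesis by (simp add: module_hom.diff[OF projM_hom] projM_pp)
      next
        case False
        then have "projM i (g d) = 0" using gF[of d] i unfolding Flt_def by simp
        then show ?thesis using False by (simp add: module_hom.diff[OF projM_hom] projM_pp)
      qed
    qed
    have "g d - (\<Sum>(n, a, h)\<leftarrow>xs. grAV_act_family scM YM n a h d)
        = (g d - projM d v) + (projM d v - (\<Sum>(n, a, h)\<leftarrow>xs. grAV_act_family scM YM n a h d))"
      by simp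
    also have "\<dots> \<in> grAM_low projV scM projM YM d"
    proof -
      have a1: "g d - projM d v \<in> grAM_low projV scM projM YM d" unfolding pv by (rule Flt_low[OF fl])
      have a2: "projM d v - (\<Sum>(n, a, h)\<leftarrow>xs. grAV_act_family scM YM n a h d) \<in> grAM_low projV scM projM YM d"
        using xs(2) by blast
      show ?thesis by (rule module.subspace_add[OF mM low_sub a1 a2])
    qed
    finally show "g d - (\<Sum>(n, a, h)\<leftarrow>xs. grAV_act_family scM YM n a h d) \<in> grAM_low projV scM projM YM d" .
  qed
qed

end

theorem proposition4p7:
  fixes scV :: "complex \<Rightarrow> 'v::ab_group_add \<Rightarrow> 'v"
    and projV :: "nat \<Rightarrow> 'v \<Rightarrow> 'v"
    and Y :: "'v \<Rightarrow> int \<Rightarrow> 'v \<Rightarrow> 'v"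
    and vac om :: 'v and c :: complex
    and scM :: "complex \<Rightarrow> 'm::ab_group_add \<Rightarrow> 'm"
    and projM :: "nat \<Rightarrow> 'm \<Rightarrow> 'm"
    and YM :: "'v \<Rightarrow> int \<Rightarrow> 'm \<Rightarrow> 'm"
    and W :: "'m set"
  assumes "VOA scV projV Y vac om c"
    and "CFT_type scV projV vac"
    and "admissible_module scV projV Y vac scM projM YM"
    and "strongly_generated projV scM YM W"
  shows "grAM_generated_by projV scM projM YM (psi projM ` W)
         \<and> (strongly_fin_generated projV scM YM \<longrightarrow> grAM_fin_generated projV scM projM YM)"
proof (intro conjI impI)
  show "grAM_generated_by projV scM projM YM (psi projM ` W)"
    by (rule main[OF assms(1,2,3,4)])
next
  assume "strongly_fin_generated projV scM YM"
  then obtain W' where W': "finite W'" "strongly_generated projV scM YM W'"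
    unfolding strongly_fin_generated_def by blast
  show "grAM_fin_generated projV scM projM YM"
    unfolding grAM_fin_generated_def
  proof (rule exI[of _ "psi projM ` W'"], intro conjI)
    show "finite (psi projM ` W')" using W'(1) by simp
    show "psi projM ` W' \<subseteq> grAM_carrier projM" using psi_carrier[OF assms(1,2,3)] by blast
    show "grAM_generated_by projV scM projM YM (psi projM ` W')" by (rule main[OF assms(1,2,3) W'(2)])
  qed
qed

end
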